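(* Let $r\ge 2$ and let $K$ be a basic $r$-hole. Then: (1) $K$ is $(r-1)$-path connected; (2) $d_K(F)\ge 2$ for every $(r-1)$-face $F$ of $K$; (3) for every $r$-face $\bar F$ of $K$, the complex $K-\bar F$ is $(r-1)$-path connected.
   Context: A (finite abstract) simplicial complex $K$ on a finite vertex set $V(K)$ is a family of subsets of $V(K)$ closed under taking subsets and containing every singleton; an $i$-face is a member of cardinality $i+1$; $S_i(K)$ is the set of $i$-faces; facets are inclusion-maximal faces; $K$ is pure if all facets have the same dimension. For an $i$-face $F$, $d_K(F)$ is the number of $(i+1)$-faces of $K$ containing $F$. Two distinct $i$-faces are up-neighbors if their union is an $(i+1)$-face of $K$. $K$ is $i$-path connected if for any two $i$-faces $F,G$ of $K$ there is a sequence $F=F_1,F_2,\dots,F_m=G$ of $i$-faces in which consecutive terms are up-neighbors. $\beta_r(K)=\dim_{\mathbb R}H_r(K;\mathbb R)$ is the $r$-th Betti number (simplicial homology with real coefficients). A basic $r$-hole is a pure $r$-dimensional complex $K$ with $\beta_r(K)=1$ such that for every $r$-face $\bar F$, the complex $K-\bar F$ obtained by deleting only the face $\bar F$ (keeping all its proper subsets) satisfies $\beta_r(K-\bar F)=0$. *)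

theory Defs
  imports Complex_Main "HOL-Library.Function_Algebras"
begin

text \<open>A finite abstract simplicial complex, given as its family of faces
  (the vertex set is the union of the faces, so every vertex singleton is a face).\<close>
definition simplicial_complex :: "'a set set \<Rightarrow> bool" where
  "simplicial_complex K \<longleftrightarrow> finite K \<and> (\<forall>F\<in>K. \<forall>G. G \<subseteq> F \<longrightarrow> G \<in> K)"

definition vertices :: "'a set set \<Rightarrow> 'a set" where
  "vertices K = \<Union>K"

definition faces :: "'a set set \<Rightarrow> nat \<Rightarrow> 'a set set" where
  "faces K i = {F \<in> K. card F = i + 1}"

definition facets :: "'a set set \<Rightarrow> 'a set set" where
  "facets K = {F \<in> K. \<forall>G\<in>K. F \<subseteq> G \<longrightarrow> G = F}"

definition pure_dim :: "'a set set \<Rightarrow> nat \<Rightarrow> bool" where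
  "pure_dim K r \<longleftrightarrow> (\<forall>F\<in>facets K. card F = r + 1)"

definition degree :: "'a set set \<Rightarrow> 'a set \<Rightarrow> nat" where
  "degree K F = card {G \<in> K. F \<subseteq> G \<and> card G = card F + 1}"

definition up_neighbors :: "'a set set \<Rightarrow> nat \<Rightarrow> 'a set \<Rightarrow> 'a set \<Rightarrow> bool" where
  "up_neighbors K i F G \<longleftrightarrow> F \<in> faces K i \<and> G \<in> faces K i \<and> F \<noteq> G \<and> F \<union> G \<in> faces K (i + 1)"

definition path_connected_i :: "'a set set \<Rightarrow> nat \<Rightarrow> bool" where
  "path_connected_i K i \<longleftrightarrow>
     (\<forall>F\<in>faces K i. \<forall>G\<in>faces K i. \<exists>ps. ps \<noteq> [] \<and> hd ps = F \<and> last ps = G \<and>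
        set ps \<subseteq> faces K i \<and> (\<forall>j. Suc j < length ps \<longrightarrow> up_neighbors K i (ps ! j) (ps ! Suc j)))"

text \<open>Orientation of faces is induced by the linear order on vertices.
  Real i-chains: real functions on sets of vertices vanishing outside the i-faces.\<close>
definition chains :: "'a set set \<Rightarrow> nat \<Rightarrow> ('a set \<Rightarrow> real) set" where
  "chains K i = {c. \<forall>F. F \<notin> faces K i \<longrightarrow> c F = 0}"

definition incidence :: "'a::linorder set \<Rightarrow> 'a set \<Rightarrow> real" where
  "incidence F G = (-1) ^ card {v \<in> F. v < the_elem (F - G)}"

definition bd :: "'a::linorder set set \<Rightarrow> nat \<Rightarrow> ('a set \<Rightarrow> real) \<Rightarrow> ('a set \<Rightarrow> real)" where
  "bd K i c = (\<lambda>G. if G \<in> faces K i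
      then (\<Sum>F\<in>{F \<in> faces K (i + 1). G \<subseteq> F}. incidence F G * c F) else 0)"

definition cycles :: "'a::linorder set set \<Rightarrow> nat \<Rightarrow> ('a set \<Rightarrow> real) set" where
  "cycles K r = {c \<in> chains K r. r = 0 \<or> bd K (r - 1) c = (\<lambda>_. 0)}"

definition boundaries :: "'a::linorder set set \<Rightarrow> nat \<Rightarrow> ('a set \<Rightarrow> real) set" where
  "boundaries K r = bd K r ` chains K (r + 1)"

definition fscale :: "real \<Rightarrow> ('a set \<Rightarrow> real) \<Rightarrow> ('a set \<Rightarrow> real)" where
  "fscale a c = (\<lambda>x. a * c x)"

text \<open>r-th Betti number: dim Z_r - dim B_r (= dim of H_r(K;R), since B_r is a subspace of Z_r).\<close>
definition betti :: "'a::linorder set set \<Rightarrow> nat \<Rightarrow> nat" where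
  "betti K r = vector_space.dim fscale (cycles K r) - vector_space.dim fscale (boundaries K r)"

definition basic_hole :: "'a::linorder set set \<Rightarrow> nat \<Rightarrow> bool" where
  "basic_hole K r \<longleftrightarrow> simplicial_complex K \<and> pure_dim K r \<and> betti K r = 1 \<and>
     (\<forall>F\<in>faces K r. betti (K - {F}) r = 0)"

end

theory Submission
  imports Defs
begin


lemma vs: "vector_space (fscale :: real \<Rightarrow> ('a set \<Rightarrow> real) \<Rightarrow> _)"
  by unfold_locales (auto simp: fscale_def fun_eq_iff algebra_simps)

lemma vsm: "module (fscale :: real \<Rightarrow> ('a set \<Rightarrow> real) \<Rightarrow> _)"
  using vs module_iff_vector_space by blast

lemma sum_fun_apply: "finite A \<Longrightarrow> (\<Sum>a\<in>A. f a) x = (\<Sum>a\<in>A. f a x)"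
  by (induct A rule: finite_induct) auto

definition ind :: "'a set \<Rightarrow> 'a set \<Rightarrow> real" where
  "ind F = (\<lambda>G. if G = F then 1 else 0)"

lemma chains_span:
  assumes "finite (faces K r)"
  shows "chains K r \<subseteq> module.span fscale (ind ` faces K r)"
proof
  fix c assume c: "c \<in> chains K r"
  have "c = (\<Sum>F\<in>faces K r. fscale (c F) (ind F))"
  proof
    fix G
    show "c G = (\<Sum>F\<in>faces K r. fscale (c F) (ind F)) G"
    proof -
      have e: "\<And>F. fscale (c F) (ind F) G = (if F = G then c G else 0)"
        by (auto simp: fscale_def ind_def)
      show ?thesis using c assms by (cases "G \<in> faces K r") (auto simp: sum_fun_apply e chains_def)
    qed
  qed
  also have "\<dots> \<in> module.span fscale (ind ` faces K r)"
    by (intro module.span_sum[OF vsm] module.span_scale[OF vsm] module.span_base[OF vsm]) auto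
  finally show "c \<in> module.span fscale (ind ` faces K r)" .
qed

lemma dim0:
  assumes "V \<subseteq> chains K r" "finite (faces K r)" "vector_space.dim fscale V = 0" "v \<in> V"
  shows "v = 0"
proof -
  obtain B where B: "B \<subseteq> V" "\<not> module.dependent fscale B" "V \<subseteq> module.span fscale B"
     "card B = vector_space.dim fscale V"
    by (rule vector_space.basis_exists[OF vs])
  have BT: "B \<subseteq> module.span fscale (ind ` faces K r)"
    using B(1) assms(1) chains_span[OF assms(2)] by (meson subset_trans)
  have "finite B"
    using vector_space.independent_span_bound[OF vs finite_imageI[OF assms(2)] B(2) BT] by (rule conjunct1)
  then have "B = {}" using B(4) assms(3) by simp
  then show ?thesis using B(3) assms(4) module.span_empty[OF vsm] by auto
qed

lemma dim1:
  assumes "vector_space.dim fscale V = 1"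
  shows "\<exists>z\<in>V. z \<noteq> 0 \<and> (\<forall>v\<in>V. \<exists>a. v = fscale a z)"
proof -
  obtain B where B: "B \<subseteq> V" "\<not> module.dependent fscale B" "V \<subseteq> module.span fscale B"
     "card B = vector_space.dim fscale V"
    by (rule vector_space.basis_exists[OF vs])
  have "card B = 1" using B(4) assms by simp
  then obtain z where z: "B = {z}" by (rule card_1_singletonE)
  have "\<not> module.dependent fscale {z}" using B(2) z by simp
  then have "z \<noteq> 0" using vector_space.dependent_single[OF vs, of z] by simp
  moreover have "module.span fscale B = range (\<lambda>k. fscale k z)"
    unfolding z by (rule module.span_singleton[OF vsm])
  moreover have "z \<in> V" using B(1) z by simp
  moreover have "\<forall>v\<in>V. \<exists>a. v = fscale a z"
  proof
    fix v assume "v \<in> V"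
    then have "v \<in> range (\<lambda>k. fscale k z)" using B(3) \<open>module.span fscale B = _\<close> by auto
    then show "\<exists>a. v = fscale a z" by auto
  qed
  ultimately show ?thesis by blast
qed

lemma dim_zero_set: "vector_space.dim fscale {0::'a set \<Rightarrow> real} = 0"
proof -
  obtain B where B: "B \<subseteq> {0::'a set \<Rightarrow> real}" "\<not> module.dependent fscale B"
     "{0::'a set \<Rightarrow> real} \<subseteq> module.span fscale B"
     "card B = vector_space.dim fscale {0::'a set \<Rightarrow> real}"
    by (rule vector_space.basis_exists[OF vs])
  have "0 \<notin> B"
  proof
    assume "0 \<in> B"
    then have "B = {0}" using B(1) by blast
    moreover have "module.dependent fscale {0::'a set \<Rightarrow> real}"
      using vector_space.dependent_single[OF vs, of "0::'a set \<Rightarrow> real"] by simp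
    ultimately show False using B(2) by simp
  qed
  then have "B = {}" using B(1) by blast
  then show ?thesis using B(4) by (metis card.empty)
qed



lemma faces_D: "F \<in> faces K i \<Longrightarrow> F \<in> K \<and> finite F \<and> card F = i + 1"
  unfolding faces_def using card.infinite by fastforce

lemma sc_sub: "simplicial_complex K \<Longrightarrow> F \<in> K \<Longrightarrow> G \<subseteq> F \<Longrightarrow> G \<in> K"
  unfolding simplicial_complex_def by blast

lemma sc_fin: "simplicial_complex K \<Longrightarrow> finite (faces K i)"
  unfolding simplicial_complex_def faces_def by auto

lemma in_facet:
  assumes "simplicial_complex K" "X \<in> K"
  shows "\<exists>M\<in>facets K. X \<subseteq> M"
proof -
  have "finite {G\<in>K. X \<subseteq> G}" using assms unfolding simplicial_complex_def by auto
  moreover have "{G\<in>K. X \<subseteq> G} \<noteq> {}" using assms by auto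
  ultimately have "\<exists>m\<in>{G\<in>K. X \<subseteq> G}. \<forall>b\<in>{G\<in>K. X \<subseteq> G}. m \<le> b \<longrightarrow> m = b"
    by (rule finite_has_maximal)
  then obtain m where m: "m \<in> {G\<in>K. X \<subseteq> G}" "\<forall>b\<in>{G\<in>K. X \<subseteq> G}. m \<subseteq> b \<longrightarrow> m = b"
    by blast
  then have "m \<in> facets K" unfolding facets_def by auto
  with m show ?thesis by auto
qed

lemma pure_top:
  assumes "simplicial_complex K" "pure_dim K r" "X \<in> K"
  shows "\<exists>H\<in>faces K r. X \<subseteq> H"
  using in_facet[OF assms(1,3)] assms(2) unfolding pure_dim_def faces_def facets_def by auto

lemma pure_none:
  assumes "simplicial_complex K" "pure_dim K r"
  shows "faces K (r+1) = {}"
proof (rule ccontr)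
  assume "faces K (r+1) \<noteq> {}"
  then obtain X where X: "X \<in> faces K (r+1)" by auto
  then obtain H where H: "H \<in> faces K r" "X \<subseteq> H" using pure_top[OF assms] faces_D by blast
  have "card X \<le> card H" using H faces_D card_mono by blast
  then show False using faces_D[OF X] faces_D[OF H(1)] by simp
qed

lemma sub_card_minus1:
  assumes "X \<subseteq> F" "finite F" "card X + 1 = card F"
  shows "\<exists>x\<in>F. X = F - {x}"
proof -
  have "card (F - X) = 1" using assms card_Diff_subset[of X F] finite_subset by fastforce
  then obtain x where "F - X = {x}" using card_1_singletonE by blast
  then show ?thesis using assms by blast
qed

lemma U:
  assumes "H \<in> faces L (i+1)" "X \<in> faces L i" "Y \<in> faces L i" "X \<subseteq> H" "Y \<subseteq> H" "X \<noteq> Y"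
  shows "up_neighbors L i X Y"
proof -
  have fH: "finite H" "card H = i + 2" using faces_D[OF assms(1)] by auto
  have "X \<union> Y = H"
  proof (rule card_subset_eq[OF fH(1)])
    show "X \<union> Y \<subseteq> H" using assms by auto
    have "card X = i+1" "card Y = i + 1" "finite Y" "finite X" using faces_D[OF assms(2)] faces_D[OF assms(3)] by auto
    then have "\<not> Y \<subseteq> X" using assms(6) card_subset_eq[of X Y] by auto
    then have "X \<subset> X \<union> Y" by auto
    then have "card X < card (X \<union> Y)" using fH \<open>finite Y\<close> assms psubset_card_mono
      by (metis finite_UnI finite_subset)
    moreover have "card (X \<union> Y) \<le> card H" using \<open>X \<union> Y \<subseteq> H\<close> fH card_mono by blast
    ultimately show "card (X \<union> Y) = card H" using \<open>card X = i+1\<close> fH by linarith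
  qed
  then show ?thesis using assms unfolding up_neighbors_def by auto
qed

lemma inc_pm: "incidence F G \<noteq> 0"
  unfolding incidence_def by simp

lemma inc_remove: "incidence H (H - {u}) = (-1) ^ card {w\<in>H. w < u}" if "u \<in> H"
proof -
  have "H - (H - {u}) = {u}" using that by auto
  then show ?thesis unfolding incidence_def by simp
qed

lemma inner_zero:
  assumes sc: "simplicial_complex K" and H: "H \<in> faces K (i+2)" and E: "E \<in> faces K i"
  shows "(\<Sum>X\<in>{X\<in>faces K (i+1). E \<subseteq> X \<and> X \<subseteq> H}. incidence X E * incidence H X) = 0"
proof (cases "E \<subseteq> H")
  case False
  then have "{X\<in>faces K (i+1). E \<subseteq> X \<and> X \<subseteq> H} = {}" by auto
  then show ?thesis by (metis sum.empty)
next
  case True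
  have fH: "finite H" "card H = i + 3" "H \<in> K" using faces_D[OF H] by auto
  have cE: "card E = i + 1" "finite E" using faces_D[OF E] by auto
  have "card (H - E) = 2" using card_Diff_subset[OF cE(2) True] fH cE by simp
  then obtain u v where uv0: "H - E = {u, v}" "u \<noteq> v" using card_2_iff by metis
  then obtain u v where uv: "H - E = {u, v}" "u < v"
    by (metis insert_commute linorder_neq_iff)
  have uH: "u \<in> H" "v \<in> H" "u \<notin> E" "v \<notin> E" using uv by auto
  have set: "{X\<in>faces K (i+1). E \<subseteq> X \<and> X \<subseteq> H} = {H - {u}, H - {v}}"
  proof
    show "{X\<in>faces K (i+1). E \<subseteq> X \<and> X \<subseteq> H} \<subseteq> {H - {u}, H - {v}}"
    proof
      fix X assume X: "X \<in> {X\<in>faces K (i+1). E \<subseteq> X \<and> X \<subseteq> H}"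
      then have "card X + 1 = card H" using faces_D fH by fastforce
      then obtain x where x: "x \<in> H" "X = H - {x}" using sub_card_minus1 X fH by blast
      then have "x \<notin> E" using X by auto
      then have "x = u \<or> x = v" using uv x by auto
      then show "X \<in> {H - {u}, H - {v}}" using x by auto
    qed
    show "{H - {u}, H - {v}} \<subseteq> {X\<in>faces K (i+1). E \<subseteq> X \<and> X \<subseteq> H}"
      using uH fH sc_sub[OF sc fH(3)] True unfolding faces_def by auto
  qed
  have ne: "H - {u} \<noteq> H - {v}" using uH uv by auto
  define a where "a = card {w\<in>H. w < u}"
  define b where "b = card {w\<in>H. w < v}"
  have i1: "incidence H (H - {u}) = (-1)^a" using inc_remove uH a_def by blast
  have i2: "incidence H (H - {v}) = (-1)^b" using inc_remove uH b_def by blast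
  have d1: "(H - {u}) - E = {v}" using uv by auto
  have d2: "(H - {v}) - E = {u}" using uv by auto
  have s1: "{w \<in> H - {u}. w < v} = {w\<in>H. w < v} - {u}" by auto
  have b1: "b = Suc (card ({w\<in>H. w < v} - {u}))"
    unfolding b_def using uH uv fH card_Suc_Diff1[of "{w\<in>H. w < v}" u] by auto
  have i3a: "incidence (H - {u}) E = (-1)^card {w \<in> H - {u}. w < v}"
    unfolding incidence_def d1 by (simp only: the_elem_eq)
  have i3: "incidence (H - {u}) E = (-1)^(b - 1)"
    using i3a unfolding s1 using b1 by simp
  have s2: "{w \<in> H - {v}. w < u} = {w\<in>H. w < u}" using uv by auto
  have i4a: "incidence (H - {v}) E = (-1)^card {w \<in> H - {v}. w < u}"
    unfolding incidence_def d2 by (simp only: the_elem_eq)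
  have i4: "incidence (H - {v}) E = (-1)^a"
    using i4a unfolding s2 a_def .
  show ?thesis unfolding set using ne i1 i2 i3 i4 b1
    by (simp add: power_add[symmetric] add.commute)
qed

lemma bdbd:
  assumes sc: "simplicial_complex K"
  shows "bd K i (bd K (Suc i) c) = (\<lambda>_. 0)"
proof
  fix E
  show "bd K i (bd K (Suc i) c) E = 0"
  proof (cases "E \<in> faces K i")
    case False then show ?thesis by (simp add: bd_def)
  next
    case True
    let ?A = "{X\<in>faces K (i+1). E \<subseteq> X}"
    let ?B = "faces K (i+2)"
    have "bd K i (bd K (Suc i) c) E
       = (\<Sum>X\<in>?A. incidence X E * (\<Sum>H\<in>{H\<in>?B. X \<subseteq> H}. incidence H X * c H))"
      using True unfolding bd_def by (auto intro!: sum.cong)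
    also have "\<dots> = (\<Sum>X\<in>?A. \<Sum>H\<in>{H\<in>?B. X \<subseteq> H}. incidence X E * incidence H X * c H)"
      by (simp add: sum_distrib_left mult.assoc)
    also have "\<dots> = (\<Sum>H\<in>?B. \<Sum>X\<in>{X\<in>?A. X \<subseteq> H}. incidence X E * incidence H X * c H)"
      by (rule sum.swap_restrict) (use sc_fin[OF sc] in auto)
    also have "\<dots> = (\<Sum>H\<in>?B. (\<Sum>X\<in>{X\<in>faces K (i+1). E \<subseteq> X \<and> X \<subseteq> H}. incidence X E * incidence H X) * c H)"
      by (simp add: sum_distrib_right conj_assoc)
    also have "\<dots> = 0"
      using inner_zero[OF sc _ True] by simp
    finally show ?thesis .
  qed
qed



lemma path_of_rtrancl:
  assumes "(up_neighbors L i)\<^sup>*\<^sup>* F G" "F \<in> faces L i"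
  shows "\<exists>ps. ps \<noteq> [] \<and> hd ps = F \<and> last ps = G \<and> set ps \<subseteq> faces L i \<and>
     (\<forall>j. Suc j < length ps \<longrightarrow> up_neighbors L i (ps ! j) (ps ! Suc j))"
  using assms(1)
proof (induct rule: rtranclp_induct)
  case base
  then show ?case using assms(2) by (intro exI[of _ "[F]"]) auto
next
  case (step y z)
  then obtain ps where ps: "ps \<noteq> []" "hd ps = F" "last ps = y" "set ps \<subseteq> faces L i"
     "\<forall>j. Suc j < length ps \<longrightarrow> up_neighbors L i (ps ! j) (ps ! Suc j)" by blast
  have zf: "z \<in> faces L i" using step(2) unfolding up_neighbors_def by auto
  have "\<forall>j. Suc j < length (ps @ [z]) \<longrightarrow> up_neighbors L i ((ps @ [z]) ! j) ((ps @ [z]) ! Suc j)"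
  proof (intro allI impI)
    fix j assume j: "Suc j < length (ps @ [z])"
    show "up_neighbors L i ((ps @ [z]) ! j) ((ps @ [z]) ! Suc j)"
    proof (cases "Suc j < length ps")
      case True then show ?thesis using ps(5) by (simp add: nth_append)
    next
      case False
      then have "j = length ps - 1" using j by simp
      then have "(ps @ [z]) ! j = y" "(ps @ [z]) ! Suc j = z" using ps(1,3) False j
        by (auto simp: nth_append last_conv_nth)
      then show ?thesis using step(2) by simp
    qed
  qed
  then show ?case using ps zf by (intro exI[of _ "ps @ [z]"]) auto
qed

lemma pc_intro:
  assumes "\<And>F G. F \<in> faces L i \<Longrightarrow> G \<in> faces L i \<Longrightarrow> (up_neighbors L i)\<^sup>*\<^sup>* F G"
  shows "path_connected_i L i"
  unfolding path_connected_i_def using assms path_of_rtrancl by metis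

lemma faces_conn:
  assumes "R\<^sup>*\<^sup>* H0 H1"
    and R: "\<And>H H'. R H H' \<Longrightarrow> H' \<in> faces L (i+1) \<and> (\<exists>G\<in>faces L i. G \<subseteq> H \<and> G \<subseteq> H')"
    and "H0 \<in> faces L (i+1)" "F \<in> faces L i" "F \<subseteq> H0"
  shows "\<forall>X\<in>faces L i. X \<subseteq> H1 \<longrightarrow> (up_neighbors L i)\<^sup>*\<^sup>* F X"
  using assms(1)
proof (induct rule: rtranclp_induct)
  case base
  show ?case
  proof (intro ballI impI)
    fix X assume "X \<in> faces L i" "X \<subseteq> H0"
    then show "(up_neighbors L i)\<^sup>*\<^sup>* F X"
      using U[OF assms(3,4) _ assms(5)] by (cases "F = X") auto
  qed
next
  case (step y z)
  obtain G where G: "G \<in> faces L i" "G \<subseteq> y" "G \<subseteq> z" and zf: "z \<in> faces L (i+1)"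
    using R[OF step(2)] by blast
  have FG: "(up_neighbors L i)\<^sup>*\<^sup>* F G" using step(3) G by blast
  show ?case
  proof (intro ballI impI)
    fix X assume X: "X \<in> faces L i" "X \<subseteq> z"
    show "(up_neighbors L i)\<^sup>*\<^sup>* F X"
    proof (cases "G = X")
      case True then show ?thesis using FG by simp
    next
      case False
      then have "up_neighbors L i G X" using U[OF zf G(1) X(1) G(3) X(2)] by simp
      then show ?thesis using FG by (meson rtranclp.rtrancl_into_rtrancl)
    qed
  qed
qed

lemma rtranclp_sym:
  assumes "\<And>a b. R a b \<Longrightarrow> R b a" "R\<^sup>*\<^sup>* a b"
  shows "R\<^sup>*\<^sup>* b a"
  using assms(2) by (induct rule: rtranclp_induct) (auto intro: converse_rtranclp_into_rtranclp assms(1))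

lemma bnd0:
  assumes "faces L (r+1) = {}"
  shows "boundaries L r = {0}"
proof -
  have "chains L (r+1) = {0}" using assms by (auto simp: chains_def fun_eq_iff)
  moreover have "bd L r 0 = 0" by (auto simp: bd_def fun_eq_iff)
  ultimately show ?thesis unfolding boundaries_def by auto
qed

lemma betti_eq:
  assumes "faces L (r+1) = {}"
  shows "betti L r = vector_space.dim fscale (cycles L r)"
  unfolding betti_def bnd0[OF assms] dim_zero_set by simp



locale bh =
  fixes K :: "'a::linorder set set" and r :: nat
  assumes sc: "simplicial_complex K" and pure: "pure_dim K r" and r2: "2 \<le> r"
    and b1: "betti K r = 1" and b0: "\<forall>F\<in>faces K r. betti (K - {F}) r = 0"
begin

lemma rr[simp]: "Suc (r - Suc 0) = r" "r - 1 + 1 = r" "Suc (r - 1) = r" "Suc (r - 2) = r - 1" "r - 2 + 1 = r - 1"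
  using r2 by auto

lemma cyc_iff: "c \<in> cycles L r \<longleftrightarrow> c \<in> chains L r \<and> bd L (r-1) c = (\<lambda>_. 0)"
  using r2 unfolding cycles_def by auto

lemma finK: "finite (faces K i)" using sc_fin[OF sc] .

lemma dimZ: "vector_space.dim fscale (cycles K r) = 1"
  using b1 betti_eq[OF pure_none[OF sc pure]] by simp

definition z where "z = (SOME z. z \<in> cycles K r \<and> z \<noteq> 0 \<and> (\<forall>v\<in>cycles K r. \<exists>a. v = fscale a z))"

lemma z_prop: "z \<in> cycles K r" "z \<noteq> 0" "\<And>v. v \<in> cycles K r \<Longrightarrow> \<exists>a. v = fscale a z"
proof -
  have "\<exists>z. z \<in> cycles K r \<and> z \<noteq> 0 \<and> (\<forall>v\<in>cycles K r. \<exists>a. v = fscale a z)"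
    using dim1[OF dimZ] by blast
  from someI_ex[OF this] show "z \<in> cycles K r" "z \<noteq> 0" "\<And>v. v \<in> cycles K r \<Longrightarrow> \<exists>a. v = fscale a z"
    unfolding z_def by blast+
qed

lemma z_bd: "G \<in> faces K (r-1) \<Longrightarrow> (\<Sum>H\<in>{H\<in>faces K r. G \<subseteq> H}. incidence H G * z H) = 0"
proof -
  assume G: "G \<in> faces K (r-1)"
  have "bd K (r-1) z G = 0" using z_prop(1) cyc_iff by metis
  then show ?thesis using G unfolding bd_def by simp
qed

lemma z_chain: "H \<notin> faces K r \<Longrightarrow> z H = 0"
  using z_prop(1) cyc_iff unfolding chains_def by blast

lemma z_nz: assumes F: "F \<in> faces K r" shows "z F \<noteq> 0"
proof
  assume zF: "z F = 0"
  let ?L = "K - {F}"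
  have n: "faces ?L (r+1) = {}" using pure_none[OF sc pure] unfolding faces_def by auto
  have d0: "vector_space.dim fscale (cycles ?L r) = 0" using b0 F betti_eq[OF n] by simp
  have cF: "card F = r + 1" using F faces_D by blast
  have fL1: "faces ?L (r-1) = faces K (r-1)" using cF r2 unfolding faces_def by auto
  have fL: "faces ?L r = faces K r - {F}" unfolding faces_def by auto
  have "z \<in> chains ?L r" using z_chain zF fL unfolding chains_def by auto
  moreover have "bd ?L (r-1) z = (\<lambda>_. 0)"
  proof
    fix G
    show "bd ?L (r-1) z G = 0"
    proof (cases "G \<in> faces K (r-1)")
      case False then show ?thesis using fL1 by (simp add: bd_def)
    next
      case True
      have s: "{H\<in>faces ?L r. G \<subseteq> H} = {H\<in>faces K r. G \<subseteq> H} - {F}" using fL by auto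
      have "bd ?L (r-1) z G = (\<Sum>H\<in>{H\<in>faces ?L r. G \<subseteq> H}. incidence H G * z H)"
        using True fL1 by (simp add: bd_def)
      also have "\<dots> = (\<Sum>H\<in>{H\<in>faces K r. G \<subseteq> H}. incidence H G * z H)"
        unfolding s using finK zF by (simp add: sum_diff1)
      finally show ?thesis using z_bd True by simp
    qed
  qed
  ultimately have "z \<in> cycles ?L r" using cyc_iff by blast
  moreover have fin: "finite (faces ?L r)" using finK fL by simp
  moreover have sub: "cycles ?L r \<subseteq> chains ?L r" unfolding cycles_def by auto
  ultimately have "z = 0" using dim0[OF sub fin d0] by blast
  then show False using z_prop(2) by simp
qed

lemma bd_restrict:
  assumes "G \<in> faces K (r-1)"
  shows "bd K (r-1) (\<lambda>H. if H\<in>T then z H else 0) G = (\<Sum>H\<in>{H\<in>faces K r. G \<subseteq> H} \<inter> T. incidence H G * z H)"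
  using assms finK by (simp add: bd_def sum.inter_restrict if_distrib cong: if_cong)

lemma restrict_all:
  assumes T: "T \<subseteq> faces K r" "H0 \<in> T"
    and cl: "\<And>G H H'. G \<in> faces K (r-1) \<Longrightarrow> H \<in> T \<Longrightarrow> H' \<in> faces K r \<Longrightarrow> G \<subseteq> H \<Longrightarrow> G \<subseteq> H' \<Longrightarrow> H' \<in> T"
  shows "T = faces K r"
proof -
  define w where "w = (\<lambda>H. if H\<in>T then z H else 0)"
  have "w \<in> chains K r" using T unfolding w_def chains_def by auto
  moreover have "bd K (r-1) w = (\<lambda>_. 0)"
  proof
    fix G show "bd K (r-1) w G = 0"
    proof (cases "G \<in> faces K (r-1)")
      case False then show ?thesis by (simp add: bd_def)
    next
      case True
      show ?thesis
      proof (cases "\<exists>H\<in>T. G \<subseteq> H")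
        case True': True
        then have "{H\<in>faces K r. G \<subseteq> H} \<inter> T = {H\<in>faces K r. G \<subseteq> H}" using cl[OF True] by blast
        then show ?thesis using bd_restrict[OF True] z_bd[OF True] unfolding w_def by simp
      next
        case False
        then have "{H\<in>faces K r. G \<subseteq> H} \<inter> T = {}" by blast
        then show ?thesis using bd_restrict[OF True] unfolding w_def by simp
      qed
    qed
  qed
  ultimately have "w \<in> cycles K r" using cyc_iff by blast
  then obtain a where a: "w = fscale a z" using z_prop(3) by blast
  have "z H0 = a * z H0" using fun_cong[OF a, of H0] T unfolding w_def fscale_def by simp
  then have a1: "a = 1" using z_nz T by auto
  show ?thesis
  proof
    show "faces K r \<subseteq> T"
    proof
      fix H assume H: "H \<in> faces K r"
      have "w H = z H" using a a1 unfolding fscale_def by simp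
      then show "H \<in> T" using z_nz[OF H] unfolding w_def by (auto split: if_splits)
    qed
  qed (use T in auto)
qed

end


context bh begin

definition adjK where
  "adjK H H' \<longleftrightarrow> H \<in> faces K r \<and> H' \<in> faces K r \<and> (\<exists>G\<in>faces K (r-1). G \<subseteq> H \<and> G \<subseteq> H')"

lemma adjK_all:
  assumes H0: "H0 \<in> faces K r" and H: "H \<in> faces K r"
  shows "adjK\<^sup>*\<^sup>* H0 H"
proof -
  define T where "T = {H. adjK\<^sup>*\<^sup>* H0 H}"
  have sub: "T \<subseteq> faces K r"
  proof
    fix H assume "H \<in> T"
    then have "adjK\<^sup>*\<^sup>* H0 H" unfolding T_def by simp
    then show "H \<in> faces K r" by (induct rule: rtranclp_induct) (use H0 adjK_def in auto)
  qed
  have "T = faces K r"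
  proof (rule restrict_all[OF sub])
    show "H0 \<in> T" unfolding T_def by simp
    fix G H H' assume "G \<in> faces K (r-1)" "H \<in> T" "H' \<in> faces K r" "G \<subseteq> H" "G \<subseteq> H'"
    then have "adjK H H'" using sub unfolding adjK_def by blast
    then show "H' \<in> T" using \<open>H \<in> T\<close> unfolding T_def by (auto intro: rtranclp.rtrancl_into_rtrancl)
  qed
  then show ?thesis using H unfolding T_def by auto
qed

lemma part1: "path_connected_i K (r - 1)"
proof (rule pc_intro)
  fix F G assume F: "F \<in> faces K (r-1)" and G: "G \<in> faces K (r-1)"
  obtain HF where HF: "HF \<in> faces K r" "F \<subseteq> HF" using pure_top[OF sc pure] F faces_D by blast
  obtain HG where HG: "HG \<in> faces K r" "G \<subseteq> HG" using pure_top[OF sc pure] G faces_D by blast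
  have a: "adjK\<^sup>*\<^sup>* HF HG" using adjK_all HF HG by blast
  have R: "\<And>H H'. adjK H H' \<Longrightarrow> H' \<in> faces K (r-1+1) \<and> (\<exists>G\<in>faces K (r-1). G \<subseteq> H \<and> G \<subseteq> H')"
    unfolding adjK_def by simp
  have HF': "HF \<in> faces K (r-1+1)" using HF by simp
  have "\<forall>X\<in>faces K (r-1). X \<subseteq> HG \<longrightarrow> (up_neighbors K (r-1))\<^sup>*\<^sup>* F X"
    by (rule faces_conn[OF a R HF' F HF(2)])
  then show "(up_neighbors K (r-1))\<^sup>*\<^sup>* F G" using G HG by blast
qed

lemma degset: "F \<in> faces K (r-1) \<Longrightarrow> {G \<in> K. F \<subseteq> G \<and> card G = card F + 1} = {H\<in>faces K r. F \<subseteq> H}"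
proof -
  assume F: "F \<in> faces K (r-1)"
  have c: "card F = r" using faces_D[OF F] by simp
  show ?thesis unfolding faces_def c by blast
qed

lemma part2: assumes F: "F \<in> faces K (r-1)" shows "2 \<le> degree K F"
proof (rule ccontr)
  assume "\<not> 2 \<le> degree K F"
  then have c: "card {H\<in>faces K r. F \<subseteq> H} < 2" unfolding degree_def degset[OF F] by simp
  obtain H where H: "H \<in> faces K r" "F \<subseteq> H" using pure_top[OF sc pure] F faces_D by blast
  have fin: "finite {H\<in>faces K r. F \<subseteq> H}" using finK by simp
  have "card {H\<in>faces K r. F \<subseteq> H} \<noteq> 0" using H fin by auto
  then have "card {H\<in>faces K r. F \<subseteq> H} = 1" using c by simp
  then obtain H' where H': "{H\<in>faces K r. F \<subseteq> H} = {H'}" using card_1_singletonE by blast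
  have "incidence H' F * z H' = 0" using z_bd[OF F] unfolding H' by simp
  moreover have "H' \<in> faces K r" using H' by auto
  ultimately show False using z_nz[of H'] inc_pm[of H' F] by simp
qed

end


context bh begin

definition adjF where
  "adjF Fb H H' \<longleftrightarrow> H \<in> faces K r - {Fb} \<and> H' \<in> faces K r - {Fb} \<and> (\<exists>G\<in>faces K (r-1). G \<subseteq> H \<and> G \<subseteq> H')"

definition comp where "comp Fb H0 = {H. (adjF Fb)\<^sup>*\<^sup>* H0 H}"

context
  fixes Fb assumes Fb: "Fb \<in> faces K r"
begin

lemma comp_sub: "H0 \<in> faces K r - {Fb} \<Longrightarrow> comp Fb H0 \<subseteq> faces K r - {Fb}"
proof
  fix H assume H0: "H0 \<in> faces K r - {Fb}" and "H \<in> comp Fb H0"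
  then have "(adjF Fb)\<^sup>*\<^sup>* H0 H" unfolding comp_def by simp
  then show "H \<in> faces K r - {Fb}" by (induct rule: rtranclp_induct) (use H0 adjF_def in auto)
qed

lemma comp_step: "H \<in> comp Fb H0 \<Longrightarrow> adjF Fb H H' \<Longrightarrow> H' \<in> comp Fb H0"
  unfolding comp_def by (auto intro: rtranclp.rtrancl_into_rtrancl)

lemma A_ne:
  assumes H0: "H0 \<in> faces K r - {Fb}"
  shows "\<exists>G\<in>faces K (r-1). G \<subseteq> Fb \<and> (\<exists>H\<in>comp Fb H0. G \<subseteq> H)"
proof (rule ccontr)
  assume neg: "\<not> ?thesis"
  have "comp Fb H0 = faces K r"
  proof (rule restrict_all)
    show "comp Fb H0 \<subseteq> faces K r" using comp_sub[OF H0] by blast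
    show "H0 \<in> comp Fb H0" by (simp add: comp_def)
    fix G H H' assume a: "G \<in> faces K (r-1)" "H \<in> comp Fb H0" "H' \<in> faces K r" "G \<subseteq> H" "G \<subseteq> H'"
    show "H' \<in> comp Fb H0"
    proof (cases "H' = Fb")
      case True then show ?thesis using neg a by blast
    next
      case False
      have "H \<in> faces K r - {Fb}" using comp_sub[OF H0] a(2) by blast
      then have "adjF Fb H H'" unfolding adjF_def using False a by blast
      then show ?thesis using comp_step a(2) by blast
    qed
  qed
  then show False using comp_sub[OF H0] Fb by blast
qed

lemma A_all:
  assumes H0: "H0 \<in> faces K r - {Fb}" and G': "G' \<in> faces K (r-1)" "G' \<subseteq> Fb"
  shows "\<exists>H\<in>comp Fb H0. G' \<subseteq> H"
proof (rule ccontr)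
  assume neg: "\<not> ?thesis"
  define T where "T = comp Fb H0"
  define A where "A = {G\<in>faces K (r-1). G \<subseteq> Fb \<and> (\<exists>H\<in>T. G \<subseteq> H)}"
  define w where "w = (\<lambda>H. if H\<in>T then z H else 0)"
  have G'A: "G' \<notin> A" using neg unfolding A_def T_def by blast
  obtain G where GA: "G \<in> A" using A_ne[OF H0] unfolding A_def T_def by blast
  have TS: "T \<subseteq> faces K r - {Fb}" using comp_sub[OF H0] unfolding T_def .
  have bdw: "bd K (r-1) w X = (if X \<in> A then - (incidence Fb X * z Fb) else 0)"
    if X: "X \<in> faces K (r-1)" for X
  proof (cases "\<exists>H\<in>T. X \<subseteq> H")
    case True
    then obtain H1 where H1: "H1 \<in> T" "X \<subseteq> H1" by blast
    have eq: "{H\<in>faces K r. X \<subseteq> H} \<inter> T = {H\<in>faces K r. X \<subseteq> H} - {Fb}"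
    proof
      show "{H\<in>faces K r. X \<subseteq> H} \<inter> T \<subseteq> {H\<in>faces K r. X \<subseteq> H} - {Fb}" using TS by blast
      show "{H\<in>faces K r. X \<subseteq> H} - {Fb} \<subseteq> {H\<in>faces K r. X \<subseteq> H} \<inter> T"
      proof
        fix H assume H: "H \<in> {H\<in>faces K r. X \<subseteq> H} - {Fb}"
        have "adjF Fb H1 H" unfolding adjF_def using H H1 TS X by blast
        then show "H \<in> {H\<in>faces K r. X \<subseteq> H} \<inter> T" using comp_step H H1(1) unfolding T_def by blast
      qed
    qed
    have "bd K (r-1) w X = (\<Sum>H\<in>{H\<in>faces K r. X \<subseteq> H} - {Fb}. incidence H X * z H)"
      using bd_restrict[OF X, of T] eq unfolding w_def by simp
    also have "\<dots> = (\<Sum>H\<in>{H\<in>faces K r. X \<subseteq> H}. incidence H X * z H)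
        - (if Fb \<in> {H\<in>faces K r. X \<subseteq> H} then incidence Fb X * z Fb else 0)"
      using finK[of r] by (simp add: sum_diff1)
    also have "\<dots> = - (if X \<subseteq> Fb then incidence Fb X * z Fb else 0)"
      using z_bd[OF X] Fb by simp
    finally show ?thesis using True X unfolding A_def by auto
  next
    case False
    then have "{H\<in>faces K r. X \<subseteq> H} \<inter> T = {}" by blast
    then show ?thesis using bd_restrict[OF X, of T] False unfolding w_def A_def by simp
  qed
  have fFb: "card Fb = r + 1" "finite Fb" "Fb \<in> K" using faces_D[OF Fb] by auto
  have GK: "G \<in> faces K (r-1)" "G \<subseteq> Fb" using GA unfolding A_def by auto
  have cG: "card G + 1 = card Fb" using faces_D[OF GK(1)] fFb r2 by simp
  obtain g where g: "g \<in> Fb" "G = Fb - {g}" using sub_card_minus1[OF GK(2) fFb(2) cG] by blast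
  have cG': "card G' + 1 = card Fb" using faces_D[OF G'(1)] fFb r2 by simp
  obtain g' where g': "g' \<in> Fb" "G' = Fb - {g'}" using sub_card_minus1[OF G'(2) fFb(2) cG'] by blast
  have gg: "g \<noteq> g'" using g g' GA G'A by blast
  define E where "E = Fb - {g, g'}"
  have cgg: "card {g, g'} = 2" using gg by simp
  have "card E = card Fb - 2" unfolding E_def using card_Diff_subset[of "{g,g'}" Fb] g g' cgg by simp
  then have cE: "card E = r - 2 + 1" using fFb r2 by simp
  have EK: "E \<in> K" using sc_sub[OF sc fFb(3)] unfolding E_def by blast
  have E: "E \<in> faces K (r-2)" using EK cE unfolding faces_def by simp
  have s2: "Suc (r-2) = r - 1" using r2 by simp
  have zero: "bd K (r-2) (bd K (r-1) w) E = 0"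
    using fun_cong[OF bdbd[OF sc, of "r-2" w], of E] unfolding s2 by simp
  have s3: "r - 2 + 1 = r - 1" using r2 by simp
  have "bd K (r-2) (bd K (r-1) w) E = (\<Sum>X\<in>{X\<in>faces K (r-1). E \<subseteq> X}. incidence X E * bd K (r-1) w X)"
    using E unfolding bd_def[of K "r-2"] s3 by simp
  also have "\<dots> = (\<Sum>X\<in>{X\<in>faces K (r-1). E \<subseteq> X}. if X = G then incidence G E * (- (incidence Fb G * z Fb)) else 0)"
  proof (rule sum.cong[OF refl])
    fix X assume X: "X \<in> {X\<in>faces K (r-1). E \<subseteq> X}"
    show "incidence X E * bd K (r-1) w X = (if X = G then incidence G E * (- (incidence Fb G * z Fb)) else 0)"
    proof (cases "X \<in> A")
      case True
      then have XF: "X \<subseteq> Fb" "X \<in> faces K (r-1)" unfolding A_def by auto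
      have cX: "card X + 1 = card Fb" using faces_D[OF XF(2)] fFb r2 by simp
      obtain x where x: "x \<in> Fb" "X = Fb - {x}" using sub_card_minus1[OF XF(1) fFb(2) cX] by blast
      have "x \<notin> E" using X x by auto
      then have "x = g \<or> x = g'" using x(1) unfolding E_def by blast
      then have "X = G" using x g g' True G'A by blast
      then show ?thesis using bdw[OF XF(2)] True by simp
    next
      case False
      then have "X \<noteq> G" using GA by blast
      then show ?thesis using bdw[of X] X False by simp
    qed
  qed
  also have "\<dots> = incidence G E * (- (incidence Fb G * z Fb))"
  proof -
    have "G \<in> {X\<in>faces K (r-1). E \<subseteq> X}" using GK g unfolding E_def by blast
    moreover have "finite {X\<in>faces K (r-1). E \<subseteq> X}" using finK[of "r-1"] by simp
    ultimately show ?thesis using sum.delta[of "{X\<in>faces K (r-1). E \<subseteq> X}" G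
      "\<lambda>_. incidence G E * (- (incidence Fb G * z Fb))"] by simp
  qed
  finally have "incidence G E * (- (incidence Fb G * z Fb)) = 0" using zero by simp
  then show False using inc_pm[of G E] inc_pm[of Fb G] z_nz[OF Fb] by simp
qed

lemma conn':
  assumes H0: "H0 \<in> faces K r - {Fb}" and H1: "H1 \<in> faces K r - {Fb}"
  shows "(adjF Fb)\<^sup>*\<^sup>* H0 H1"
proof -
  have fFb: "card Fb = r + 1" "finite Fb" "Fb \<in> K" using faces_D[OF Fb] by auto
  then have "Fb \<noteq> {}" by auto
  then obtain x where x: "x \<in> Fb" by blast
  define G where "G = Fb - {x}"
  have "G \<in> K" using sc_sub[OF sc fFb(3)] unfolding G_def by blast
  moreover have "card G = r - 1 + 1" unfolding G_def using x fFb r2 by simp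
  ultimately have G: "G \<in> faces K (r-1)" "G \<subseteq> Fb" unfolding faces_def G_def by auto
  obtain H where H: "H \<in> comp Fb H0" "G \<subseteq> H" using A_all[OF H0 G] by blast
  obtain H' where H': "H' \<in> comp Fb H1" "G \<subseteq> H'" using A_all[OF H1 G] by blast
  have "H \<in> faces K r - {Fb}" "H' \<in> faces K r - {Fb}" using comp_sub H0 H1 H H' by blast+
  then have a: "adjF Fb H H'" unfolding adjF_def using G H H' by blast
  have b: "(adjF Fb)\<^sup>*\<^sup>* H0 H" using H unfolding comp_def by simp
  have c: "(adjF Fb)\<^sup>*\<^sup>* H1 H'" using H' unfolding comp_def by simp
  have sym: "\<And>a b. adjF Fb a b \<Longrightarrow> adjF Fb b a" unfolding adjF_def by blast
  have d: "(adjF Fb)\<^sup>*\<^sup>* H' H1" by (rule rtranclp_sym[OF sym c])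
  show ?thesis using b a d by (meson rtranclp.rtrancl_into_rtrancl rtranclp_trans)
qed

lemma up_face:
  assumes F: "F \<in> faces K (r-1)"
  shows "\<exists>H\<in>faces K r - {Fb}. F \<subseteq> H"
proof (rule ccontr)
  assume neg: "\<not> ?thesis"
  then have "{H\<in>faces K r. F \<subseteq> H} \<subseteq> {Fb}" by blast
  then have "card {H\<in>faces K r. F \<subseteq> H} \<le> 1" using card_mono[of "{Fb}"] by fastforce
  moreover have "2 \<le> card {H\<in>faces K r. F \<subseteq> H}" using part2[OF F] unfolding degree_def degset[OF F] .
  ultimately show False by simp
qed

lemma part3: "path_connected_i (K - {Fb}) (r - 1)"
proof (rule pc_intro)
  have cFb: "card Fb = r + 1" using faces_D[OF Fb] by simp
  have fL1: "faces (K - {Fb}) (r-1) = faces K (r-1)" using cFb r2 unfolding faces_def by auto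
  have fL: "faces (K - {Fb}) (r-1+1) = faces K r - {Fb}" unfolding faces_def by auto
  fix F G assume F: "F \<in> faces (K - {Fb}) (r-1)" and G: "G \<in> faces (K - {Fb}) (r-1)"
  obtain HF where HF: "HF \<in> faces K r - {Fb}" "F \<subseteq> HF" using up_face F fL1 by blast
  obtain HG where HG: "HG \<in> faces K r - {Fb}" "G \<subseteq> HG" using up_face G fL1 by blast
  have a: "(adjF Fb)\<^sup>*\<^sup>* HF HG" using conn' HF HG by blast
  have R: "\<And>H H'. adjF Fb H H' \<Longrightarrow> H' \<in> faces (K - {Fb}) (r-1+1) \<and> (\<exists>G\<in>faces (K - {Fb}) (r-1). G \<subseteq> H \<and> G \<subseteq> H')"
    unfolding adjF_def fL fL1 by blast
  have HF': "HF \<in> faces (K - {Fb}) (r-1+1)" using HF fL by blast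
  have "\<forall>X\<in>faces (K - {Fb}) (r-1). X \<subseteq> HG \<longrightarrow> (up_neighbors (K - {Fb}) (r-1))\<^sup>*\<^sup>* F X"
    by (rule faces_conn[OF a R HF' F HF(2)])
  then show "(up_neighbors (K - {Fb}) (r-1))\<^sup>*\<^sup>* F G" using G HG by blast
qed

end
end

theorem mainTheorem2:
  fixes K :: "'a::linorder set set" and r :: nat
  assumes "r \<ge> 2" and "basic_hole K r"
  shows "path_connected_i K (r - 1)
    \<and> (\<forall>F\<in>faces K (r - 1). degree K F \<ge> 2)
    \<and> (\<forall>F\<in>faces K r. path_connected_i (K - {F}) (r - 1))"
proof -
  have "bh K r" using assms unfolding basic_hole_def bh_def by blast
  then interpret bh K r .
  show ?thesis using part1 part2 part3 by blast
qed


end
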